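(* Let $\mu$ be the Cauchy distribution $d\mu(x)=\frac1\pi\frac{dx}{1+x^2}$ and $t>0$. For each $u\in\mathbb R$, $v_{t}(u)$ is the unique positive number $v$ satisfying \[u^2=\frac1v(1+v)(t-v-v^2).\] Consequently $u$ and $\frac{dv_t}{du}(u)$ have opposite sign; in particular $v_t$ is unimodal with peak at $0$, and $v_t(0)=\frac{-1+\sqrt{1+4t}}{2}$.
   Context: $v_t(u)=\inf\{v>0:\int\frac{d\mu(x)}{(u-x)^2+v^2}\le\frac1t\}$ for $u\in\mathbb R$. *)

theory Defs
  imports "HOL-Analysis.Analysis"
begin

definition cauchy_measure :: "real measure" where
  "cauchy_measure = density lborel (\<lambda>x. ennreal (1 / (pi * (1 + x\<^sup>2))))"

definition v_t :: "real \<Rightarrow> real \<Rightarrow> real" where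
  "v_t t u = Inf {v. v > 0 \<and>
      (\<integral>x. 1 / ((u - x)\<^sup>2 + v\<^sup>2) \<partial>cauchy_measure) \<le> 1 / t}"

end

theory Submission imports Defs "HOL-Real_Asymp.Real_Asymp" begin

lemma frac_aux: "P \<noteq> 0 \<Longrightarrow> Q \<noteq> 0 \<Longrightarrow> D \<noteq> 0 \<Longrightarrow> a * Q + b * P = D \<Longrightarrow>
   (a/D)/P + (b/D)/Q = 1/(P * Q)" for P Q D a b :: real
  by (simp add: field_simps)

lemma pf_identity:
  fixes u v x :: real
  defines "s \<equiv> u\<^sup>2 + v\<^sup>2"
  defines "D \<equiv> (s-1)\<^sup>2 + 4 * u\<^sup>2"
  defines "A \<equiv> 2 * u/D" and "B \<equiv> (s-1)/D"
  assumes v: "v > 0" and D: "D \<noteq> 0"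
  shows "1/((1+x\<^sup>2) * ((x-u)\<^sup>2+v\<^sup>2)) = (A * x+B)/(1+x\<^sup>2) + (-A * x + 2 * u * A - B)/((x-u)\<^sup>2+v\<^sup>2)"
proof -
  have p: "1+x\<^sup>2 > 0" by (simp add: add_pos_nonneg)
  have q: "(x-u)\<^sup>2+v\<^sup>2 > 0" using v by (simp add: add_nonneg_pos)
  have e: "(2 * u * x + (s-1)) * ((x-u)\<^sup>2+v\<^sup>2) + (-2 * u * x + 4 * u\<^sup>2 - (s-1)) * (1+x\<^sup>2) = D"
    unfolding D_def s_def by (simp add: algebra_simps power2_eq_square)
  have 1: "A * x+B = (2 * u * x + (s-1))/D" unfolding A_def B_def using D by (simp add: field_simps)
  have 2: "-A * x + 2 * u * A - B = (-2 * u * x + 4 * u\<^sup>2 - (s-1))/D" unfolding A_def B_def using D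
    by (simp add: field_simps power2_eq_square)
  show ?thesis unfolding 1 2 by (rule frac_aux[OF _ _ D e, symmetric]) (use p q in auto)
qed

lemma F_alg: "P \<noteq> 0 \<Longrightarrow> Q \<noteq> 0 \<Longrightarrow> v \<noteq> 0 \<Longrightarrow>
  (A/2) * (2 * x/P - 2 * (x-u)/Q) + B * (1/P) + ((u * A-B)/v) * (v/Q) = (A * x+B)/P + (-A * x + 2 * u * A - B)/Q"
  for P Q v A B x u :: real
  by (simp add: field_simps)

lemma F_deriv:
  fixes u v x A B :: real
  assumes v: "v > 0"
  shows "((\<lambda>x. (A/2) * ln ((1+x\<^sup>2)/((x-u)\<^sup>2+v\<^sup>2)) + B * arctan x + ((u * A-B)/v) * arctan ((x-u)/v))
     has_real_derivative ((A * x+B)/(1+x\<^sup>2) + (-A * x + 2 * u * A - B)/((x-u)\<^sup>2+v\<^sup>2))) (at x)"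
proof -
  have p: "1+y\<^sup>2 > 0" for y :: real by (simp add: add_pos_nonneg)
  have q: "(y-u)\<^sup>2+v\<^sup>2 > 0" for y using v by (simp add: add_nonneg_pos)
  have feq: "(\<lambda>x. ln ((1+x\<^sup>2)/((x-u)\<^sup>2+v\<^sup>2))) = (\<lambda>x. ln (1+x\<^sup>2) - ln ((x-u)\<^sup>2+v\<^sup>2))"
  proof (rule ext)
    fix y show "ln ((1+y\<^sup>2)/((y-u)\<^sup>2+v\<^sup>2)) = ln (1+y\<^sup>2) - ln ((y-u)\<^sup>2+v\<^sup>2)"
      using p[of y] q[of y] v by (simp add: ln_div)
  qed
  have d1: "((\<lambda>x. ln ((1+x\<^sup>2)/((x-u)\<^sup>2+v\<^sup>2))) has_real_derivative
        (2 * x/(1+x\<^sup>2) - 2 * (x-u)/((x-u)\<^sup>2+v\<^sup>2))) (at x)"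
    unfolding feq using p[of x] q[of x]
    by (auto intro!: derivative_eq_intros simp: field_simps)
  have d2: "(arctan has_real_derivative 1/(1+x\<^sup>2)) (at x)"
    by (auto intro!: derivative_eq_intros simp: field_simps)
  have d3: "((\<lambda>x. arctan ((x-u)/v)) has_real_derivative v/((x-u)\<^sup>2+v\<^sup>2)) (at x)"
    using v q[of x] by (auto intro!: derivative_eq_intros simp: field_simps power2_eq_square)
  have d: "((\<lambda>x. (A/2) * ln ((1+x\<^sup>2)/((x-u)\<^sup>2+v\<^sup>2)) + B * arctan x + ((u * A-B)/v) * arctan ((x-u)/v))
     has_real_derivative ((A/2) * (2 * x/(1+x\<^sup>2) - 2 * (x-u)/((x-u)\<^sup>2+v\<^sup>2)) + B * (1/(1+x\<^sup>2))
        + ((u * A-B)/v) * (v/((x-u)\<^sup>2+v\<^sup>2)))) (at x)"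
    by (intro DERIV_add DERIV_cmult d1 d2 d3)
  have "(A/2) * (2 * x/(1+x\<^sup>2) - 2 * (x-u)/((x-u)\<^sup>2+v\<^sup>2)) + B * (1/(1+x\<^sup>2))
        + ((u * A-B)/v) * (v/((x-u)\<^sup>2+v\<^sup>2)) = (A * x+B)/(1+x\<^sup>2) + (-A * x + 2 * u * A - B)/((x-u)\<^sup>2+v\<^sup>2)"
    using v p[of x] q[of x] by (intro F_alg) auto
  with d show ?thesis by simp
qed
lemma cm_integral:
  "(\<integral>x. f x \<partial>cauchy_measure) = (\<integral>x. (1/(pi * (1+x\<^sup>2))) * f x \<partial>lborel)"
  if [measurable]: "f \<in> borel_measurable borel" for f :: "real \<Rightarrow> real"
  unfolding cauchy_measure_def
  by (subst integral_density) auto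

lemma lborel_to_interval:
  "(\<integral>x. f x \<partial>lborel) = (LBINT x=-\<infinity>..\<infinity>. f x)" for f :: "real \<Rightarrow> real"
  by (simp add: interval_lebesgue_integral_def set_lebesgue_integral_def)

lemma frac_cancel_aux: "N \<noteq> 0 \<Longrightarrow> M \<noteq> 0 \<Longrightarrow> v \<noteq> 0 \<Longrightarrow> ((a * N)/(M * N))/v = a / (v * M)"
  for N M v a :: real by (simp add: field_simps)

lemma int_general:
  fixes u v :: real
  assumes v: "v > 0" and D: "(u\<^sup>2 + v\<^sup>2 - 1)\<^sup>2 + 4 * u\<^sup>2 \<noteq> 0"
  shows "(\<integral>x. 1 / ((u - x)\<^sup>2 + v\<^sup>2) \<partial>cauchy_measure) = (1 + v) / (v * (u\<^sup>2 + (1 + v)\<^sup>2))"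
proof -
  define s where "s = u\<^sup>2 + v\<^sup>2"
  define DD where "DD = (s-1)\<^sup>2 + 4 * u\<^sup>2"
  define A where "A = 2 * u/DD"
  define B where "B = (s-1)/DD"
  have DD: "DD \<noteq> 0" using D unfolding DD_def s_def .
  have p: "1+y\<^sup>2 > 0" for y :: real by (simp add: add_pos_nonneg)
  have q: "(y-u)\<^sup>2+v\<^sup>2 > 0" for y using v by (simp add: add_nonneg_pos)
  define f where "f x = 1/(pi * (1+x\<^sup>2)) * (1/((u-x)\<^sup>2+v\<^sup>2))" for x
  define F where "F x = (1/pi) * ((A/2) * ln ((1+x\<^sup>2)/((x-u)\<^sup>2+v\<^sup>2)) + B * arctan x + ((u * A-B)/v) * arctan ((x-u)/v))" for x
  have fpf: "f x = (1/pi) * ((A * x+B)/(1+x\<^sup>2) + (-A * x + 2 * u * A - B)/((x-u)\<^sup>2+v\<^sup>2))" for x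
  proof -
    have "f x = (1/pi) * (1/((1+x\<^sup>2) * ((x-u)\<^sup>2+v\<^sup>2)))"
      unfolding f_def by (simp add: power2_commute)
    also have "\<dots> = (1/pi) * ((A * x+B)/(1+x\<^sup>2) + (-A * x + 2 * u * A - B)/((x-u)\<^sup>2+v\<^sup>2))"
      unfolding A_def B_def DD_def s_def using pf_identity[OF v D] by simp
    finally show ?thesis .
  qed
  have Fd: "(F has_real_derivative f x) (at x)" for x
    unfolding F_def fpf by (intro DERIV_cmult F_deriv v)
  have fc: "isCont f x" for x
    unfolding f_def using p[of x] q[of x] by (auto intro!: continuous_intros simp: power2_commute)
  have fnn: "f x \<ge> 0" for x
    unfolding f_def using p[of x] q[of x] by simp
  have lt: "((\<lambda>x::real. arctan ((x-u)/v)) \<longlongrightarrow> pi/2) at_top"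
    "((\<lambda>x::real. arctan ((x-u)/v)) \<longlongrightarrow> -pi/2) at_bot"
    "((\<lambda>x::real. ln ((1+x\<^sup>2)/((x-u)\<^sup>2+v\<^sup>2))) \<longlongrightarrow> 0) at_top"
    "((\<lambda>x::real. ln ((1+x\<^sup>2)/((x-u)\<^sup>2+v\<^sup>2))) \<longlongrightarrow> 0) at_bot"
    using v by real_asymp+
  have Ftop: "(F \<longlongrightarrow> (1/pi) * ((A/2) * 0 + B * (pi/2) + ((u * A-B)/v) * (pi/2))) at_top"
    unfolding F_def by (intro tendsto_intros lt tendsto_arctan_at_top)
  have Fbot: "(F \<longlongrightarrow> (1/pi) * ((A/2) * 0 + B * (-(pi/2)) + ((u * A-B)/v) * (-pi/2))) at_bot"
    unfolding F_def by (intro tendsto_intros lt tendsto_arctan_at_bot)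
  have "(\<integral>x. 1 / ((u - x)\<^sup>2 + v\<^sup>2) \<partial>cauchy_measure) = (LBINT x=-\<infinity>..\<infinity>. f x)"
    by (subst cm_integral) (simp_all add: lborel_to_interval f_def[abs_def])
  also have "\<dots> = (1/pi) * ((A/2) * 0 + B * (pi/2) + ((u * A-B)/v) * (pi/2)) - (1/pi) * ((A/2) * 0 + B * (-(pi/2)) + ((u * A-B)/v) * (-pi/2))"
    by (rule interval_integral_FTC_nonneg[where F=F])
      (use Fd fc fnn Ftop Fbot in \<open>auto simp: ereal_tendsto_simps\<close>)
  also have "\<dots> = B + (u * A-B)/v" by (simp add: field_simps)
  also have "\<dots> = (1 + v) / (v * (u\<^sup>2 + (1 + v)\<^sup>2))"
  proof -
    have e1: "DD = (u\<^sup>2+(1+v)\<^sup>2) * (u\<^sup>2+(v-1)\<^sup>2)" unfolding DD_def s_def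
      by (simp add: algebra_simps power2_eq_square)
    have e2: "B * (v-1) + u * A = (1+v) * (u\<^sup>2+(v-1)\<^sup>2)/DD" unfolding A_def B_def s_def using DD
      by (simp add: field_simps power2_eq_square)
    have nz: "u\<^sup>2+(v-1)\<^sup>2 \<noteq> 0" using DD e1 by auto
    have nz2: "u\<^sup>2+(1+v)\<^sup>2 \<noteq> 0" using DD e1 by auto
    have "B + (u * A-B)/v = (B * (v-1) + u * A)/v" using v by (simp add: field_simps)
    also have "\<dots> = (1 + v) / (v * (u\<^sup>2 + (1 + v)\<^sup>2))" unfolding e2 e1 using nz nz2 v
      by (simp add: frac_cancel_aux)
    finally show ?thesis .
  qed
  finally show ?thesis .
qed
lemma int_special:
  "(\<integral>x. 1 / ((0 - x)\<^sup>2 + 1\<^sup>2) \<partial>cauchy_measure) = (1/2::real)"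
proof -
  have p: "1+y\<^sup>2 > 0" for y :: real by (simp add: add_pos_nonneg)
  define f where "f x = 1/(pi * (1+x\<^sup>2)) * (1/((0-x)\<^sup>2+1\<^sup>2))" for x :: real
  define F where "F x = (1/(2 * pi)) * (x/(1+x\<^sup>2) + arctan x)" for x :: real
  have Fd: "(F has_real_derivative f x) (at x)" for x
  proof -
    have "(F has_real_derivative (1/(2 * pi)) * (((1+x\<^sup>2) - x * (2 * x))/(1+x\<^sup>2)\<^sup>2 + 1/(1+x\<^sup>2))) (at x)"
      unfolding F_def using p[of x]
      by (intro DERIV_cmult DERIV_add DERIV_arctan DERIV_divide derivative_eq_intros)
         (auto simp: power2_eq_square divide_inverse)
    moreover have "(1/(2 * pi)) * (((1+x\<^sup>2) - x * (2 * x))/(1+x\<^sup>2)\<^sup>2 + 1/(1+x\<^sup>2)) = f x"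
    proof -
      obtain P where P: "P = 1 + x\<^sup>2" by simp
      have Pp: "P > 0" using P p[of x] by simp
      have "((1+x\<^sup>2) - x * (2 * x))/(1+x\<^sup>2)\<^sup>2 + 1/(1+x\<^sup>2) = 2/P\<^sup>2"
      proof -
        have h: "P - x * (2 * x) = 2 - P" using P by (simp add: power2_eq_square)
        have "(2 - P)/P\<^sup>2 + 1/P = 2/P\<^sup>2" using Pp by (simp add: field_simps power2_eq_square)
        then show ?thesis unfolding P[symmetric] h .
      qed
      moreover have "f x = 1/(pi * P * P)" unfolding f_def P by simp
      ultimately show ?thesis using Pp by (simp add: power2_eq_square)
    qed
    ultimately show ?thesis by simp
  qed
  have fc: "isCont f x" for x
    unfolding f_def using p[of x] by (auto intro!: continuous_intros)
  have fnn: "f x \<ge> 0" for x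
    unfolding f_def using p[of x] by simp
  have lt: "((\<lambda>x::real. x/(1+x\<^sup>2)) \<longlongrightarrow> 0) at_top" "((\<lambda>x::real. x/(1+x\<^sup>2)) \<longlongrightarrow> 0) at_bot"
    by real_asymp+
  have Ftop: "(F \<longlongrightarrow> (1/(2 * pi)) * (0 + pi/2)) at_top"
    unfolding F_def by (intro tendsto_intros lt tendsto_arctan_at_top)
  have Fbot: "(F \<longlongrightarrow> (1/(2 * pi)) * (0 + -(pi/2))) at_bot"
    unfolding F_def by (intro tendsto_intros lt tendsto_arctan_at_bot)
  have "(\<integral>x. 1 / ((0 - x)\<^sup>2 + 1\<^sup>2) \<partial>cauchy_measure) = (LBINT x=-\<infinity>..\<infinity>. f x)"
    by (subst cm_integral) (simp_all add: lborel_to_interval f_def[abs_def])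
  also have "\<dots> = (1/(2 * pi)) * (0 + pi/2) - (1/(2 * pi)) * (0 + -(pi/2))"
    by (rule interval_integral_FTC_nonneg[where F=F])
      (use Fd fc fnn Ftop Fbot in \<open>auto simp: ereal_tendsto_simps\<close>)
  also have "\<dots> = 1/2" by simp
  finally show ?thesis .
qed

lemma int_formula:
  fixes u v :: real
  assumes v: "v > 0"
  shows "(\<integral>x. 1 / ((u - x)\<^sup>2 + v\<^sup>2) \<partial>cauchy_measure) = (1 + v) / (v * (u\<^sup>2 + (1 + v)\<^sup>2))"
proof (cases "(u\<^sup>2 + v\<^sup>2 - 1)\<^sup>2 + 4 * u\<^sup>2 = 0")
  case True
  have "4 * u\<^sup>2 \<le> 0" using True zero_le_power2[of "u\<^sup>2 + v\<^sup>2 - 1"] by linarith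
  then have "u = 0" by simp
  with True have "v\<^sup>2 = 1" by simp
  then have "v = 1 \<or> v = -1" using power2_eq_1_iff by blast
  with v have "v = 1" by auto
  with \<open>u = 0\<close> show ?thesis using int_special by simp
next
  case False
  then show ?thesis by (rule int_general[OF v])
qed
definition G :: "real \<Rightarrow> real \<Rightarrow> real" where "G t v = t/v + (t-1) - 2 * v - v\<^sup>2"

lemma G_eq: "v > 0 \<Longrightarrow> (1 / v) * (1 + v) * (t - v - v\<^sup>2) = G t v"
  by (simp add: G_def field_simps power2_eq_square)

lemma G_mono: assumes "t > 0" "0 < v" "v < w" shows "G t w < G t v"
proof -
  have "t/w < t/v" using assms by (simp add: divide_strict_left_mono)
  moreover have "v\<^sup>2 < w\<^sup>2" using assms by (simp add: power_strict_mono)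
  ultimately show ?thesis using assms unfolding G_def by simp
qed

lemma G_le_iff: assumes a: "t > 0" "v > 0" "w > 0" shows "G t v \<le> G t w \<longleftrightarrow> w \<le> v"
  proof
    assume "G t v \<le> G t w"
    then show "w \<le> v" using G_mono[of t v w] a by (meson linorder_not_le)
  next
    assume "w \<le> v"
    then show "G t v \<le> G t w" using G_mono[of t w v] a by (cases "w = v") auto
  qed

lemma G_cont: "v \<noteq> 0 \<Longrightarrow> isCont (G t) v"
  unfolding G_def by (auto intro!: continuous_intros)

lemma G_deriv: "v > 0 \<Longrightarrow> (G t has_real_derivative (-t/v\<^sup>2 - 2 - 2 * v)) (at v)"
  unfolding G_def by (auto intro!: derivative_eq_intros simp: field_simps power2_eq_square)

lemma G_surj: assumes t: "t > 0" shows "\<exists>v>0. G t v = y"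
proof -
  define a where "a = min 1 (t/(\<bar>y\<bar>+4))"
  define b where "b = \<bar>y\<bar> + t + 1"
  have a0: "a > 0" using t unfolding a_def by simp
  have a1: "a \<le> 1" unfolding a_def by simp
  have b1: "b \<ge> 1" unfolding b_def using t by simp
  have ab: "a \<le> b" using a1 b1 by simp
  have ta: "t/a \<ge> \<bar>y\<bar>+4"
  proof -
    have "a \<le> t/(\<bar>y\<bar>+4)" unfolding a_def by simp
    then have "a * (\<bar>y\<bar>+4) \<le> t" by (simp add: field_simps)
    then show ?thesis using a0 by (simp add: field_simps)
  qed
  have "a\<^sup>2 \<le> 1" using a0 a1 by (simp add: power_le_one)
  then have Ga: "y \<le> G t a" unfolding G_def using ta a1 t by simp
  have "t/b \<le> t" using b1 t by (simp add: divide_le_eq)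
  moreover have "b\<^sup>2 \<ge> 0" by simp
  ultimately have Gb: "G t b \<le> y" unfolding G_def using t b_def abs_ge_minus_self[of y] by linarith
  have "continuous_on {a..b} (G t)"
    using a0 by (intro continuous_at_imp_continuous_on ballI G_cont) auto
  then obtain x where "a \<le> x" "x \<le> b" "G t x = y" using IVT2'[OF Gb Ga ab] by blast
  then show ?thesis using a0 by (intro exI[of _ x]) auto
qed

definition H :: "real \<Rightarrow> real \<Rightarrow> real" where "H t y = (THE v. v > 0 \<and> G t v = y)"

lemma H_prop: assumes "t > 0" shows "H t y > 0 \<and> G t (H t y) = y"
proof -
  have "\<exists>!v. v > 0 \<and> G t v = y"
    using G_surj[OF assms] G_le_iff[OF assms] by (metis order_antisym order_refl)
  then show ?thesis unfolding H_def by (rule theI')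
qed

lemma H_unique: "t > 0 \<Longrightarrow> w > 0 \<Longrightarrow> G t w = y \<Longrightarrow> w = H t y"
  using H_prop G_le_iff by (metis order_antisym order_refl)

lemma H_mono: assumes "t > 0" "y1 < y2" shows "H t y2 < H t y1"
proof (rule ccontr)
  assume "\<not> H t y2 < H t y1"
  then have "H t y1 \<le> H t y2" by simp
  then have "G t (H t y2) \<le> G t (H t y1)" using G_le_iff assms H_prop by blast
  then show False using H_prop assms by fastforce
qed

lemma cond_iff:
  assumes t: "t > 0" and v: "v > 0"
  shows "(1 + v) / (v * (u\<^sup>2 + (1 + v)\<^sup>2)) \<le> 1/t \<longleftrightarrow> G t v \<le> u\<^sup>2"
proof -
  have d: "v * (u\<^sup>2 + (1 + v)\<^sup>2) > 0" using v by (simp add: add_nonneg_pos)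
  have "(1 + v) / (v * (u\<^sup>2 + (1 + v)\<^sup>2)) \<le> 1/t \<longleftrightarrow> t * (1+v) \<le> v * (u\<^sup>2 + (1 + v)\<^sup>2)"
    using d t by (simp add: field_simps)
  also have "\<dots> \<longleftrightarrow> G t v * v \<le> u\<^sup>2 * v"
  proof -
    have "G t v * v = t * (1+v) - v * (1+v)\<^sup>2" unfolding G_def using v
      by (simp add: field_simps power2_eq_square)
    moreover have "v * (u\<^sup>2 + (1 + v)\<^sup>2) = u\<^sup>2 * v + v * (1 + v)\<^sup>2" by (simp add: algebra_simps)
    ultimately show ?thesis by linarith
  qed
  also have "\<dots> \<longleftrightarrow> G t v \<le> u\<^sup>2" using v by simp
  finally show ?thesis .
qed

lemma vt_eq: assumes t: "t > 0" shows "v_t t u = H t (u\<^sup>2)"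
proof -
  have "{v. v > 0 \<and> (\<integral>x. 1 / ((u - x)\<^sup>2 + v\<^sup>2) \<partial>cauchy_measure) \<le> 1 / t} = {H t (u\<^sup>2)..}"
  proof (intro set_eqI iffI)
    fix v assume "v \<in> {v. v > 0 \<and> (\<integral>x. 1 / ((u - x)\<^sup>2 + v\<^sup>2) \<partial>cauchy_measure) \<le> 1 / t}"
    then have v: "v > 0" and "G t v \<le> u\<^sup>2" using int_formula cond_iff[OF t] by auto
    have Hp: "H t (u\<^sup>2) > 0" "G t (H t (u\<^sup>2)) = u\<^sup>2" using H_prop[OF t] by auto
    show "v \<in> {H t (u\<^sup>2)..}" using G_le_iff[OF t v Hp(1)] Hp(2) \<open>G t v \<le> u\<^sup>2\<close> by simp
  next
    fix v assume "v \<in> {H t (u\<^sup>2)..}"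
    then have hv: "H t (u\<^sup>2) \<le> v" by simp
    then have v: "v > 0" using H_prop[OF t, of "u\<^sup>2"] by linarith
    have "G t v \<le> G t (H t (u\<^sup>2))" using G_le_iff[OF t v] H_prop[OF t] hv by blast
    then have "G t v \<le> u\<^sup>2" using H_prop[OF t] by simp
    then show "v \<in> {v. v > 0 \<and> (\<integral>x. 1 / ((u - x)\<^sup>2 + v\<^sup>2) \<partial>cauchy_measure) \<le> 1 / t}"
      using v int_formula cond_iff[OF t v] by auto
  qed
  then show ?thesis unfolding v_t_def by simp
qed

lemma H_deriv: assumes t: "t > 0"
  shows "(H t has_real_derivative inverse (-t/(H t y)\<^sup>2 - 2 - 2 * (H t y))) (at y)"
proof -
  define w where "w = H t y"
  have w: "w > 0" "G t w = y" using H_prop[OF t] unfolding w_def by auto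
  have cont: "isCont (H t) y"
  proof -
    have "isCont (H t) (G t w)"
    proof (rule isCont_inverse_function[where d="w/2" and f="G t" and x=w])
      show "0 < w/2" using w by simp
      fix z assume "\<bar>z - w\<bar> \<le> w/2"
      then have z: "z > 0" using w(1) by (cases "z \<le> 0") (simp_all add: abs_if split: if_splits)
      show "H t (G t z) = z" using H_unique[OF t z] by simp
      show "isCont (G t) z" using z by (intro G_cont) simp
    qed
    then show ?thesis using w by simp
  qed
  have "t/w\<^sup>2 > 0" using t w by simp
  then have D: "-t/w\<^sup>2 - 2 - 2 * w < 0" using w by simp
  have "(H t has_real_derivative inverse (-t/w\<^sup>2 - 2 - 2 * w)) (at y)"
  proof (rule DERIV_inverse_function[where a="y-1" and b="y+1"])
    show "(G t has_real_derivative (-t/w\<^sup>2 - 2 - 2 * w)) (at (H t y))"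
      using G_deriv w unfolding w_def by simp
    show "-t/w\<^sup>2 - 2 - 2 * w \<noteq> 0" using D by simp
    show "y - 1 < y" "y < y + 1" by simp_all
    fix z show "G t (H t z) = z" using H_prop[OF t] by simp
  next
    show "isCont (H t) y" by (rule cont)
  qed
  then show ?thesis unfolding w_def .
qed

theorem lemma6p3:
  fixes t :: real
  assumes "t > 0"
  shows "(\<forall>u::real. v_t t u > 0
            \<and> u\<^sup>2 = (1 / v_t t u) * (1 + v_t t u) * (t - v_t t u - (v_t t u)\<^sup>2)
            \<and> (\<forall>w>0. u\<^sup>2 = (1 / w) * (1 + w) * (t - w - w\<^sup>2) \<longrightarrow> w = v_t t u))
       \<and> (\<forall>u::real. v_t t differentiable (at u)
            \<and> sgn (deriv (v_t t) u) = - sgn u)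
       \<and> (\<forall>a b::real. a < b \<and> b \<le> 0 \<longrightarrow> v_t t a < v_t t b)
       \<and> (\<forall>a b::real. 0 \<le> a \<and> a < b \<longrightarrow> v_t t b < v_t t a)
       \<and> v_t t 0 = (-1 + sqrt (1 + 4 * t)) / 2"
proof (intro conjI allI impI)
  have t: "t > 0" by fact
  have fe: "v_t t = (\<lambda>u. H t (u\<^sup>2))" using vt_eq[OF t] by (rule ext)
  fix u :: real
  show "v_t t u > 0" using vt_eq[OF t] H_prop[OF t] by simp
  show "u\<^sup>2 = (1 / v_t t u) * (1 + v_t t u) * (t - v_t t u - (v_t t u)\<^sup>2)"
    using vt_eq[OF t] H_prop[OF t, of "u\<^sup>2"] G_eq by simp
  fix w :: real assume w: "w > 0" "u\<^sup>2 = (1 / w) * (1 + w) * (t - w - w\<^sup>2)"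
  show "w = v_t t u" using w G_eq[OF w(1)] H_unique[OF t w(1)] vt_eq[OF t] by simp
next
  have t: "t > 0" by fact
  have fe: "v_t t = (\<lambda>u. H t (u\<^sup>2))" using vt_eq[OF t] by (rule ext)
  fix u :: real
  define w where "w = H t (u\<^sup>2)"
  have w: "w > 0" using H_prop[OF t] unfolding w_def by simp
  define D where "D = -t/w\<^sup>2 - 2 - 2 * w"
  have "t/w\<^sup>2 > 0" using t w by simp
  then have D: "D < 0" unfolding D_def using w by simp
  have d: "(v_t t has_real_derivative (inverse D * (2 * u))) (at u)"
    unfolding fe D_def w_def
    by (rule DERIV_chain2[OF H_deriv[OF t]]) (auto intro!: derivative_eq_intros)
  show "v_t t differentiable (at u)" using d real_differentiable_def by blast
  have "deriv (v_t t) u = inverse D * (2 * u)" using d by (rule DERIV_imp_deriv)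
  then show "sgn (deriv (v_t t) u) = - sgn u" using D by (simp add: sgn_mult)
next
  fix a b :: real assume ab: "a < b \<and> b \<le> 0"
  then have "(-b)\<^sup>2 < (-a)\<^sup>2" by (intro power_strict_mono) auto
  then have "b\<^sup>2 < a\<^sup>2" by simp
  then show "v_t t a < v_t t b" using vt_eq[OF assms] H_mono[OF assms] by simp
next
  fix a b :: real assume ab: "0 \<le> a \<and> a < b"
  then have "a\<^sup>2 < b\<^sup>2" by (simp add: power_strict_mono)
  then show "v_t t b < v_t t a" using vt_eq[OF assms] H_mono[OF assms] by simp
next
  have t: "t > 0" by fact
  define s where "s = sqrt (1 + 4 * t)"
  have s2: "s\<^sup>2 = 1 + 4 * t" unfolding s_def using t by simp
  have s1: "s > 1" unfolding s_def using t by (simp add: real_less_rsqrt)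
  define w where "w = (-1 + s)/2"
  have w: "w > 0" unfolding w_def using s1 by simp
  have "w + w\<^sup>2 = t" unfolding w_def using s2 by (simp add: field_simps power2_eq_square)
  then have "G t w = 0" using G_eq[OF w, of t, symmetric] by (simp add: algebra_simps)
  then have "w = H t 0" using H_unique[OF t w] by simp
  then show "v_t t 0 = (-1 + sqrt (1 + 4 * t)) / 2" using vt_eq[OF t, of 0] unfolding w_def s_def by simp
qed
end
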